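(* Let $G$ be a connected graph. The following are equivalent: (1) $G$ is bipartite; (2) $P_2\mid G$; (3) $G$ is not strongly disjoint from $P_2$; (4) $G$ is not weakly disjoint from $P_2$.
   Context: A weight function on finite $U$ is $\alpha:U\times U\to\mathbb{R}$, $\alpha\ge0$, symmetric, summing to $1$; degree $p(u)=\sum_{u'}\alpha(u,u')$; a graph is $(U,\alpha)$ with edges $(u,u')$ where $\alpha(u,u')>0$; connected means any two distinct vertices are joined by a path of edges; bipartite means $U=U_1\sqcup U_2$ with every edge joining $U_1$ to $U_2$. $P_2$ is the graph on $\{v_1,v_2\}$ with $\beta(v_1,v_2)=\beta(v_2,v_1)=1/2$, $\beta(v_i,v_i)=0$. For graphs $G=(U,\alpha)$, $H=(V,\beta)$ with degrees $p,q$, $H\mid G$ means there is a surjective $\phi:U\to V$ with (i) $q(v)=\sum_{u\in\phi^{-1}(v)}p(u)$, and (ii) $q(v)\sum_{u'\in\phi^{-1}(v')}\alpha(u,u')=p(u)\beta(v,v')$ for all $v,v'$, $u\in\phi^{-1}(v)$. A weight joining of $\alpha,\beta$ is a weight function $\gamma$ on $U\times V$ with degree $r(u,v)=\sum_{(u',v')}\gamma((u,v),(u',v'))$ such that $\sum_v r(u,v)=p(u)$, $\sum_u r(u,v)=q(v)$, $p(u)\sum_{\tilde v}\gamma((u,v),(u',\tilde v))=\alpha(u,u')r(u,v)$ and $q(v)\sum_{\tilde u}\gamma((u,v),(\tilde u,v'))=\beta(v,v')r(u,v)$. Strongly disjoint: the only weight joining is $\alpha\otimes\beta$, $(\alpha\otimes\beta)((u,v),(u',v'))=\alpha(u,u')\beta(v,v')$;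 weakly disjoint: every weight joining has degree $r(u,v)=p(u)q(v)$. *)

theory Defs
  imports Complex_Main
begin

text \<open>A finite vertex set U is represented by a finite type 'a (U = UNIV).
  A weight function is alpha :: 'a => 'a => real.\<close>

definition weight_fun :: "('a::finite \<Rightarrow> 'a \<Rightarrow> real) \<Rightarrow> bool" where
  "weight_fun \<alpha> \<longleftrightarrow> (\<forall>u u'. 0 \<le> \<alpha> u u') \<and> (\<forall>u u'. \<alpha> u u' = \<alpha> u' u)
     \<and> (\<Sum>u\<in>UNIV. \<Sum>u'\<in>UNIV. \<alpha> u u') = 1"

definition deg :: "('a::finite \<Rightarrow> 'a \<Rightarrow> real) \<Rightarrow> 'a \<Rightarrow> real" where
  "deg \<alpha> u = (\<Sum>u'\<in>UNIV. \<alpha> u u')"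

definition edge :: "('a \<Rightarrow> 'a \<Rightarrow> real) \<Rightarrow> 'a \<Rightarrow> 'a \<Rightarrow> bool" where
  "edge \<alpha> u u' \<longleftrightarrow> \<alpha> u u' > 0"

definition graph_connected :: "('a::finite \<Rightarrow> 'a \<Rightarrow> real) \<Rightarrow> bool" where
  "graph_connected \<alpha> \<longleftrightarrow> (\<forall>u u'. u \<noteq> u' \<longrightarrow> (edge \<alpha>)\<^sup>*\<^sup>* u u')"

definition graph_bipartite :: "('a::finite \<Rightarrow> 'a \<Rightarrow> real) \<Rightarrow> bool" where
  "graph_bipartite \<alpha> \<longleftrightarrow> (\<exists>U1 U2. U1 \<inter> U2 = {} \<and> U1 \<union> U2 = UNIV \<and>
     (\<forall>u u'. edge \<alpha> u u' \<longrightarrow> (u \<in> U1 \<and> u' \<in> U2) \<or> (u \<in> U2 \<and> u' \<in> U1)))"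

definition P2 :: "bool \<Rightarrow> bool \<Rightarrow> real" where
  "P2 v v' = (if v \<noteq> v' then 1/2 else 0)"

definition graph_divides :: "('b::finite \<Rightarrow> 'b \<Rightarrow> real) \<Rightarrow> ('a::finite \<Rightarrow> 'a \<Rightarrow> real) \<Rightarrow> bool" where
  "graph_divides \<beta> \<alpha> \<longleftrightarrow> (\<exists>\<phi> :: 'a \<Rightarrow> 'b. surj \<phi> \<and>
     (\<forall>v. deg \<beta> v = (\<Sum>u\<in>\<phi> -` {v}. deg \<alpha> u)) \<and>
     (\<forall>v v' u. \<phi> u = v \<longrightarrow>
        deg \<beta> v * (\<Sum>u'\<in>\<phi> -` {v'}. \<alpha> u u') = deg \<alpha> u * \<beta> v v'))"

definition weight_joining ::
  "('a::finite \<Rightarrow> 'a \<Rightarrow> real) \<Rightarrow> ('b::finite \<Rightarrow> 'b \<Rightarrow> real) \<Rightarrow> ('a \<times> 'b \<Rightarrow> 'a \<times> 'b \<Rightarrow> real) \<Rightarrow> bool" where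
  "weight_joining \<alpha> \<beta> \<gamma> \<longleftrightarrow> weight_fun \<gamma> \<and>
     (\<forall>u. (\<Sum>v\<in>UNIV. deg \<gamma> (u, v)) = deg \<alpha> u) \<and>
     (\<forall>v. (\<Sum>u\<in>UNIV. deg \<gamma> (u, v)) = deg \<beta> v) \<and>
     (\<forall>u v u'. deg \<alpha> u * (\<Sum>v2\<in>UNIV. \<gamma> (u, v) (u', v2)) = \<alpha> u u' * deg \<gamma> (u, v)) \<and>
     (\<forall>u v v'. deg \<beta> v * (\<Sum>u2\<in>UNIV. \<gamma> (u, v) (u2, v')) = \<beta> v v' * deg \<gamma> (u, v))"

definition tensor_weight ::
  "('a \<Rightarrow> 'a \<Rightarrow> real) \<Rightarrow> ('b \<Rightarrow> 'b \<Rightarrow> real) \<Rightarrow> ('a \<times> 'b \<Rightarrow> 'a \<times> 'b \<Rightarrow> real)" where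
  "tensor_weight \<alpha> \<beta> = (\<lambda>(u, v) (u', v'). \<alpha> u u' * \<beta> v v')"

definition strongly_disjoint :: "('a::finite \<Rightarrow> 'a \<Rightarrow> real) \<Rightarrow> ('b::finite \<Rightarrow> 'b \<Rightarrow> real) \<Rightarrow> bool" where
  "strongly_disjoint \<alpha> \<beta> \<longleftrightarrow> (\<forall>\<gamma>. weight_joining \<alpha> \<beta> \<gamma> \<longrightarrow> \<gamma> = tensor_weight \<alpha> \<beta>)"

definition weakly_disjoint :: "('a::finite \<Rightarrow> 'a \<Rightarrow> real) \<Rightarrow> ('b::finite \<Rightarrow> 'b \<Rightarrow> real) \<Rightarrow> bool" where
  "weakly_disjoint \<alpha> \<beta> \<longleftrightarrow> (\<forall>\<gamma>. weight_joining \<alpha> \<beta> \<gamma> \<longrightarrow>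
     (\<forall>u v. deg \<gamma> (u, v) = deg \<alpha> u * deg \<beta> v))"

end

theory Submission
  imports Defs
begin

lemma sum_bool_UNIV: "(\<Sum>v\<in>(UNIV::bool set). f v) = f True + f False"
  by (simp add: UNIV_bool add.commute)

lemma sum_prod_UNIV:
  "(\<Sum>x\<in>(UNIV::('a::finite \<times> 'b::finite) set). f x) = (\<Sum>a\<in>UNIV. \<Sum>b\<in>UNIV. f (a,b))"
  by (simp add: sum.cartesian_product flip: UNIV_Times_UNIV)

lemma deg_P2: "deg P2 v = 1/2"
  by (cases v) (simp_all add: deg_def P2_def sum_bool_UNIV)

lemma deg_tensor: "deg (tensor_weight \<alpha> \<beta>) (u,v) = deg \<alpha> u * deg \<beta> v"
  unfolding deg_def tensor_weight_def sum_prod_UNIV by (simp add: sum_product)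

lemma deg_pos:
  fixes \<alpha> :: "'a::finite \<Rightarrow> 'a \<Rightarrow> real"
  assumes w: "weight_fun \<alpha>" and c: "graph_connected \<alpha>"
  shows "deg \<alpha> u > 0"
proof (cases "\<exists>u'. u' \<noteq> u")
  case True
  then obtain u' where ne: "u' \<noteq> u" by blast
  with c have "(edge \<alpha>)\<^sup>*\<^sup>* u u'" unfolding graph_connected_def by auto
  then obtain w where "edge \<alpha> u w" using ne by (metis converse_rtranclpE)
  then have "\<alpha> u w > 0" by (simp add: edge_def)
  moreover have "\<alpha> u w \<le> deg \<alpha> u" unfolding deg_def
    using w by (intro member_le_sum) (auto simp: weight_fun_def)
  ultimately show ?thesis by linarith
next
  case False
  then have U: "UNIV = {u}" by auto
  from w have "(\<Sum>u\<in>UNIV. \<Sum>u'\<in>UNIV. \<alpha> u u') = 1" by (simp add: weight_fun_def)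
  then have "\<alpha> u u = 1" by (simp add: U)
  then show ?thesis by (simp add: deg_def U)
qed

lemma bip_div:
  fixes \<alpha> :: "'a::finite \<Rightarrow> 'a \<Rightarrow> real"
  assumes w: "weight_fun \<alpha>" and c: "graph_connected \<alpha>" and b: "graph_bipartite \<alpha>"
  shows "graph_divides P2 \<alpha>"
proof -
  from b obtain U1 U2 where d: "U1 \<inter> U2 = {}" and un: "U1 \<union> U2 = UNIV"
    and e: "\<And>u u'. edge \<alpha> u u' \<Longrightarrow> (u \<in> U1 \<and> u' \<in> U2) \<or> (u \<in> U2 \<and> u' \<in> U1)"
    unfolding graph_bipartite_def by blast
  define \<phi> where "\<phi> u = (u \<in> U1)" for u
  have nn: "0 \<le> \<alpha> u u'" for u u' using w by (simp add: weight_fun_def)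
  have sy: "\<alpha> u u' = \<alpha> u' u" for u u' using w by (simp add: weight_fun_def)
  have ed: "\<phi> u' = (\<not> \<phi> u)" if "\<alpha> u u' \<noteq> 0" for u u'
  proof -
    from that nn[of u u'] have "edge \<alpha> u u'" by (simp add: edge_def)
    from e[OF this] d show ?thesis unfolding \<phi>_def by blast
  qed
  have split: "(\<Sum>x\<in>UNIV. f x) = (\<Sum>x\<in>\<phi> -` {b}. f x) + (\<Sum>x\<in>\<phi> -` {\<not> b}. f x)"
    for f :: "'a \<Rightarrow> real" and b
  proof -
    have "UNIV = \<phi> -` {b} \<union> \<phi> -` {\<not> b}" by auto
    moreover have "\<phi> -` {b} \<inter> \<phi> -` {\<not> b} = {}" by auto
    ultimately show ?thesis by (metis finite sum.union_disjoint)
  qed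
  have same0: "(\<Sum>u'\<in>\<phi> -` {\<phi> u}. \<alpha> u u') = 0" for u
    by (rule sum.neutral) (use ed in auto)
  have other: "(\<Sum>u'\<in>\<phi> -` {\<not> \<phi> u}. \<alpha> u u') = deg \<alpha> u" for u
    using split[of "\<alpha> u" "\<phi> u"] same0[of u] by (simp add: deg_def)
  define A where "A b = (\<Sum>u\<in>\<phi> -` {b}. deg \<alpha> u)" for b
  have A2: "A b = (\<Sum>u\<in>\<phi> -` {b}. \<Sum>u'\<in>\<phi> -` {\<not> b}. \<alpha> u u')" for b
    unfolding A_def by (intro sum.cong refl) (simp add: other[symmetric])
  have Asym: "A b = A (\<not> b)" for b
  proof -
    have "A b = (\<Sum>u'\<in>\<phi> -` {\<not> b}. \<Sum>u\<in>\<phi> -` {b}. \<alpha> u' u)"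
      unfolding A2 by (subst sum.swap) (simp add: sy)
    also have "\<dots> = A (\<not> b)" unfolding A2 by simp
    finally show ?thesis .
  qed
  have one: "(\<Sum>u\<in>UNIV. deg \<alpha> u) = 1" using w by (simp add: weight_fun_def deg_def)
  have tot: "A b + A (\<not> b) = 1" for b
    using split[of "deg \<alpha>" b] one by (simp add: A_def)
  have Ahalf: "A b = 1/2" for b using Asym[of b] tot[of b] by linarith
  obtain u0 :: 'a where True by blast
  have "deg \<alpha> u0 > 0" using deg_pos[OF w c] .
  then obtain w0 where "\<alpha> u0 w0 \<noteq> 0" unfolding deg_def
    by (metis (no_types, lifting) less_irrefl sum.neutral)
  then have pw: "\<phi> w0 = (\<not> \<phi> u0)" by (rule ed)
  have surj: "surj \<phi>" unfolding surj_def
  proof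
    fix y show "\<exists>x. y = \<phi> x" using pw by (cases "y = \<phi> u0") auto
  qed
  show ?thesis unfolding graph_divides_def
  proof (intro exI[of _ \<phi>] conjI allI impI surj)
    fix v show "deg P2 v = (\<Sum>u\<in>\<phi> -` {v}. deg \<alpha> u)"
      using Ahalf[of v] by (simp add: A_def deg_P2)
  next
    fix v v' u assume "\<phi> u = v"
    then show "deg P2 v * (\<Sum>u'\<in>\<phi> -` {v'}. \<alpha> u u') = deg \<alpha> u * P2 v v'"
    proof (cases "v' = \<phi> u")
      case True then show ?thesis using same0[of u] \<open>\<phi> u = v\<close> by (simp add: P2_def)
    next
      case False then have "v' = (\<not> \<phi> u)" by auto
      then show ?thesis using other[of u] \<open>\<phi> u = v\<close> by (simp add: P2_def deg_P2)
    qed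
  qed
qed

lemma div_joining:
  fixes \<alpha> :: "'a::finite \<Rightarrow> 'a \<Rightarrow> real"
  assumes w: "weight_fun \<alpha>" and c: "graph_connected \<alpha>" and dv: "graph_divides P2 \<alpha>"
  shows "\<exists>\<gamma>. weight_joining \<alpha> P2 \<gamma> \<and> \<not> (\<forall>u v. deg \<gamma> (u, v) = deg \<alpha> u * deg P2 v)"
proof -
  from dv obtain \<phi> :: "'a \<Rightarrow> bool" where i: "\<And>v. deg P2 v = (\<Sum>u\<in>\<phi> -` {v}. deg \<alpha> u)"
    and ii: "\<And>v v' u. \<phi> u = v \<Longrightarrow> deg P2 v * (\<Sum>u'\<in>\<phi> -` {v'}. \<alpha> u u') = deg \<alpha> u * P2 v v'"
    unfolding graph_divides_def by blast
  define \<gamma> where "\<gamma> = (\<lambda>(u::'a, v::bool) (u', v'). if v = \<phi> u \<and> v' = \<phi> u' then \<alpha> u u' else 0)"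
  have nn: "0 \<le> \<alpha> u u'" for u u' using w by (simp add: weight_fun_def)
  have sy: "\<alpha> u u' = \<alpha> u' u" for u u' using w by (simp add: weight_fun_def)
  have g1: "(\<Sum>v2\<in>UNIV. \<gamma> (u, v) (u', v2)) = (if v = \<phi> u then \<alpha> u u' else 0)" for u v u'
    by (cases "\<phi> u'") (auto simp: \<gamma>_def sum_bool_UNIV)
  have dg: "deg \<gamma> (u, v) = (if v = \<phi> u then deg \<alpha> u else 0)" for u v
    unfolding deg_def sum_prod_UNIV g1 by (cases "v = \<phi> u") simp_all
  have filt: "(\<Sum>u2\<in>UNIV. (if v' = \<phi> u2 then f u2 else 0)) = (\<Sum>u2\<in>\<phi> -` {v'}. f u2)"
    for f :: "'a \<Rightarrow> real" and v'
  proof -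
    have "\<phi> -` {v'} = {u2 \<in> UNIV. v' = \<phi> u2}" by auto
    moreover have "(\<Sum>u2\<in>UNIV. (if v' = \<phi> u2 then f u2 else 0)) = sum f {u2 \<in> UNIV. v' = \<phi> u2}"
      by (rule sum.inter_filter[symmetric]) simp
    ultimately show ?thesis by simp
  qed
  have g2: "(\<Sum>u2\<in>UNIV. \<gamma> (u, v) (u2, v')) = (if v = \<phi> u then (\<Sum>u2\<in>\<phi> -` {v'}. \<alpha> u u2) else 0)"
    for u v v'
  proof (cases "v = \<phi> u")
    case True
    then show ?thesis using filt[of v' "\<alpha> u"] by (simp add: \<gamma>_def)
  next
    case False
    then show ?thesis by (simp add: \<gamma>_def)
  qed
  have one: "(\<Sum>u\<in>UNIV. deg \<alpha> u) = 1" using w by (simp add: weight_fun_def deg_def)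
  have wf: "weight_fun \<gamma>" unfolding weight_fun_def
  proof (intro conjI allI)
    fix x x' show "0 \<le> \<gamma> x x'" by (auto simp: \<gamma>_def nn split: prod.splits)
  next
    fix x x' show "\<gamma> x x' = \<gamma> x' x" by (auto simp: \<gamma>_def sy split: prod.splits)
  next
    have "(\<Sum>x\<in>UNIV. \<Sum>x'\<in>UNIV. \<gamma> x x') = (\<Sum>x\<in>UNIV. deg \<gamma> x)" by (simp add: deg_def)
    also have "\<dots> = (\<Sum>u\<in>UNIV. \<Sum>v\<in>UNIV. deg \<gamma> (u, v))" by (rule sum_prod_UNIV)
    also have "\<dots> = (\<Sum>u\<in>UNIV. deg \<alpha> u)" by (intro sum.cong refl) (simp add: dg sum_bool_UNIV)
    finally show "(\<Sum>x\<in>UNIV. \<Sum>x'\<in>UNIV. \<gamma> x x') = 1" using one by simp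
  qed
  have j: "weight_joining \<alpha> P2 \<gamma>" unfolding weight_joining_def
  proof (intro conjI allI wf)
    fix u show "(\<Sum>v\<in>UNIV. deg \<gamma> (u, v)) = deg \<alpha> u" by (simp add: dg sum_bool_UNIV)
  next
    fix v show "(\<Sum>u\<in>UNIV. deg \<gamma> (u, v)) = deg P2 v"
      unfolding i dg using filt[of v "deg \<alpha>"] by (simp add: eq_commute)
  next
    fix u v u' show "deg \<alpha> u * (\<Sum>v2\<in>UNIV. \<gamma> (u, v) (u', v2)) = \<alpha> u u' * deg \<gamma> (u, v)"
      by (simp add: g1 dg)
  next
    fix u v v' show "deg P2 v * (\<Sum>u2\<in>UNIV. \<gamma> (u, v) (u2, v')) = P2 v v' * deg \<gamma> (u, v)"
      using ii[of u v v'] by (auto simp: g2 dg mult.commute)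
  qed
  obtain u :: 'a where True by blast
  have pu: "deg \<alpha> u > 0" using deg_pos[OF w c] .
  have "deg \<gamma> (u, \<phi> u) \<noteq> deg \<alpha> u * deg P2 (\<phi> u)"
    using pu by (simp add: dg deg_P2)
  then show ?thesis using j by blast
qed

lemma nonbip_tensor:
  fixes \<alpha> :: "'a::finite \<Rightarrow> 'a \<Rightarrow> real"
  assumes w: "weight_fun \<alpha>" and c: "graph_connected \<alpha>" and nb: "\<not> graph_bipartite \<alpha>"
    and j: "weight_joining \<alpha> P2 \<gamma>"
  shows "\<gamma> = tensor_weight \<alpha> P2"
proof -
  have sy: "\<alpha> u u' = \<alpha> u' u" for u u' using w by (simp add: weight_fun_def)
  have gnn: "0 \<le> \<gamma> x x'" for x x' using j unfolding weight_joining_def weight_fun_def by blast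
  have gsy: "\<gamma> x x' = \<gamma> x' x" for x x' using j unfolding weight_joining_def weight_fun_def by blast
  have c1: "deg \<gamma> (u, True) + deg \<gamma> (u, False) = deg \<alpha> u" for u
    using j by (simp add: weight_joining_def sum_bool_UNIV)
  have c3: "deg \<alpha> u * (\<Sum>v2\<in>UNIV. \<gamma> (u, v) (u', v2)) = \<alpha> u u' * deg \<gamma> (u, v)" for u v u'
    using j by (simp add: weight_joining_def)
  have c4: "deg P2 v * (\<Sum>u2\<in>UNIV. \<gamma> (u, v) (u2, v')) = P2 v v' * deg \<gamma> (u, v)" for u v v'
    using j unfolding weight_joining_def by blast
  have pp: "deg \<alpha> u > 0" for u using deg_pos[OF w c] .
  have z: "\<gamma> (u, v) (u2, v) = 0" for u v u2
  proof -
    have "(\<Sum>u2\<in>UNIV. \<gamma> (u, v) (u2, v)) = 0" using c4[of v u v] by (simp add: deg_P2 P2_def)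
    then show ?thesis using gnn by (simp add: sum_nonneg_eq_0_iff)
  qed
  have key: "deg \<alpha> u * \<gamma> (u, v) (u', \<not> v) = \<alpha> u u' * deg \<gamma> (u, v)" for u v u'
    using c3[of u v u'] z[of u v u'] by (cases v) (simp_all add: sum_bool_UNIV)
  define g where "g u = deg \<gamma> (u, True) / deg \<alpha> u - 1/2" for u
  have ge: "g u' = - g u" if "edge \<alpha> u u'" for u u'
  proof -
    have a: "\<alpha> u u' > 0" using that by (simp add: edge_def)
    have k1: "deg \<alpha> u * \<gamma> (u, True) (u', False) = \<alpha> u u' * deg \<gamma> (u, True)"
      using key[of u True u'] by simp
    have k2: "deg \<alpha> u' * \<gamma> (u', False) (u, True) = \<alpha> u u' * deg \<gamma> (u', False)"
      using key[of u' False u] sy[of u u'] by simp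
    have e: "\<gamma> (u, True) (u', False) = \<gamma> (u', False) (u, True)" by (rule gsy)
    have "deg \<gamma> (u, True) / deg \<alpha> u = \<gamma> (u, True) (u', False) / \<alpha> u u'"
      using k1 a pp[of u] by (simp add: field_simps)
    also have "\<dots> = deg \<gamma> (u', False) / deg \<alpha> u'"
      using k2 e a pp[of u'] by (simp add: field_simps)
    also have "\<dots> = 1 - deg \<gamma> (u', True) / deg \<alpha> u'"
      using c1[of u'] pp[of u'] by (simp add: field_simps)
    finally show ?thesis unfolding g_def by simp
  qed
  have g0: "g u = 0" for u
  proof (rule ccontr)
    assume gu: "g u \<noteq> 0"
    have reach: "g x = g u \<or> g x = - g u" for x
    proof -
      have "(edge \<alpha>)\<^sup>*\<^sup>* u x" using c unfolding graph_connected_def by (cases "u = x") auto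
      then show ?thesis
      proof (induction rule: rtranclp_induct)
        case base then show ?case by simp
      next
        case (step y z) then show ?case using ge[of y z] by auto
      qed
    qed
    have "graph_bipartite \<alpha>" unfolding graph_bipartite_def
    proof (intro exI conjI allI impI)
      show "{x. g x = g u} \<inter> {x. g x = - g u} = {}" using gu by auto
      show "{x. g x = g u} \<union> {x. g x = - g u} = UNIV" using reach by auto
      fix x y assume "edge \<alpha> x y"
      then have "g y = - g x" by (rule ge)
      then show "(x \<in> {x. g x = g u} \<and> y \<in> {x. g x = - g u}) \<or> (x \<in> {x. g x = - g u} \<and> y \<in> {x. g x = g u})"
        using reach[of x] by auto
    qed
    with nb show False by simp
  qed
  have rT: "deg \<gamma> (u, v) = deg \<alpha> u / 2" for u v
  proof -
    have "deg \<gamma> (u, True) = deg \<alpha> u / 2" using g0[of u] pp[of u] unfolding g_def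
      by (simp add: field_simps)
    then show ?thesis using c1[of u] by (cases v) simp_all
  qed
  have pt: "\<gamma> (u, v) (u', v') = tensor_weight \<alpha> P2 (u, v) (u', v')" for u v u' v'
  proof (cases "v' = v")
    case True then show ?thesis using z by (simp add: tensor_weight_def P2_def)
  next
    case False then have "v' = (\<not> v)" by auto
    then show ?thesis using key[of u v u'] rT[of u v] pp[of u]
      by (simp add: tensor_weight_def P2_def field_simps)
  qed
  show ?thesis
  proof (intro ext)
    fix x y :: "'a \<times> bool"
    show "\<gamma> x y = tensor_weight \<alpha> P2 x y" using pt by (cases x, cases y) simp
  qed
qed

theorem proposition7p1:
  fixes \<alpha> :: "'a::finite \<Rightarrow> 'a \<Rightarrow> real"
  assumes "weight_fun \<alpha>"
    and "graph_connected \<alpha>"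
  shows "(graph_bipartite \<alpha> \<longleftrightarrow> graph_divides P2 \<alpha>)
       \<and> (graph_divides P2 \<alpha> \<longleftrightarrow> \<not> strongly_disjoint \<alpha> P2)
       \<and> (\<not> strongly_disjoint \<alpha> P2 \<longleftrightarrow> \<not> weakly_disjoint \<alpha> P2)"
proof -
  note w = assms(1) and c = assms(2)
  have BD: "graph_bipartite \<alpha> \<Longrightarrow> graph_divides P2 \<alpha>" using bip_div[OF w c] .
  have DnS: "graph_divides P2 \<alpha> \<Longrightarrow> \<not> strongly_disjoint \<alpha> P2"
  proof
    assume "graph_divides P2 \<alpha>" "strongly_disjoint \<alpha> P2"
    from div_joining[OF w c this(1)] obtain \<gamma> where j: "weight_joining \<alpha> P2 \<gamma>"
      and nd: "\<not> (\<forall>u v. deg \<gamma> (u, v) = deg \<alpha> u * deg P2 v)" by blast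
    from \<open>strongly_disjoint \<alpha> P2\<close> j have "\<gamma> = tensor_weight \<alpha> P2"
      unfolding strongly_disjoint_def by blast
    with nd show False by (simp add: deg_tensor)
  qed
  have DnW: "graph_divides P2 \<alpha> \<Longrightarrow> \<not> weakly_disjoint \<alpha> P2"
    using div_joining[OF w c] unfolding weakly_disjoint_def by blast
  have nBS: "\<not> graph_bipartite \<alpha> \<Longrightarrow> strongly_disjoint \<alpha> P2"
    unfolding strongly_disjoint_def using nonbip_tensor[OF w c] by blast
  have nBW: "\<not> graph_bipartite \<alpha> \<Longrightarrow> weakly_disjoint \<alpha> P2"
    unfolding weakly_disjoint_def
  proof (intro allI impI)
    fix \<gamma> u v assume "\<not> graph_bipartite \<alpha>" "weight_joining \<alpha> P2 \<gamma>"
    then have "\<gamma> = tensor_weight \<alpha> P2" using nonbip_tensor[OF w c] by blast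
    then show "deg \<gamma> (u, v) = deg \<alpha> u * deg P2 v" by (simp add: deg_tensor)
  qed
  show ?thesis using BD DnS DnW nBS nBW by blast
qed

end
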